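(* Let $G$ be a finite group and $H$ a normal subgroup of $G$ such that $G/H$ is cyclic. Suppose that the coset $Hx$ generates the quotient group $G/H$. Then the number of $G$-conjugacy classes contained in $Hx$ equals the number of integral $(G,H)$-classes contained in $H$.
   Context: For $g\in G$, the centralizing subgroup of $g$ with respect to $H$ is $HC_G(g)$; for a conjugacy class $X$ of $G$ it is $HC_G(g)$ for any $g\in X$. An integral $(G,H)$-class is a conjugacy class of $G$ whose centralizing subgroup with respect to $H$ is $G$ (equivalently, a $G$-class which does not split into several classes when the conjugation action is restricted to $H$). *)

theory Defs
  imports "HOL-Algebra.Algebra"
begin

definition conj_class :: "('a, 'b) monoid_scheme \<Rightarrow> 'a \<Rightarrow> 'a set" where
  "conj_class G g = {h \<otimes>\<^bsub>G\<^esub> g \<otimes>\<^bsub>G\<^esub> inv\<^bsub>G\<^esub> h | h. h \<in> carrier G}"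

definition conj_classes :: "('a, 'b) monoid_scheme \<Rightarrow> 'a set set" where
  "conj_classes G = {conj_class G g | g. g \<in> carrier G}"

definition centralizer :: "('a, 'b) monoid_scheme \<Rightarrow> 'a \<Rightarrow> 'a set" where
  "centralizer G g = {h \<in> carrier G. h \<otimes>\<^bsub>G\<^esub> g = g \<otimes>\<^bsub>G\<^esub> h}"

definition centralizing_subgroup :: "('a, 'b) monoid_scheme \<Rightarrow> 'a set \<Rightarrow> 'a \<Rightarrow> 'a set" where
  "centralizing_subgroup G H g = H <#>\<^bsub>G\<^esub> centralizer G g"

definition integral_class :: "('a, 'b) monoid_scheme \<Rightarrow> 'a set \<Rightarrow> 'a set \<Rightarrow> bool" where
  "integral_class G H C = (C \<in> conj_classes G \<and>
     (\<forall>g \<in> C. centralizing_subgroup G H g = carrier G))"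

end

theory Submission
  imports Defs
begin

lemma (in group) centralizer_subgroup:
  assumes "z \<in> carrier G"
  shows "subgroup (centralizer G z) G"
proof (rule subgroupI)
  show "centralizer G z \<subseteq> carrier G" unfolding centralizer_def by auto
  show "centralizer G z \<noteq> {}" using assms unfolding centralizer_def by (auto intro!: exI[of _ \<one>])
  fix a b assume a: "a \<in> centralizer G z" and b: "b \<in> centralizer G z"
  then have ag: "a \<in> carrier G" "a \<otimes> z = z \<otimes> a" and bg: "b \<in> carrier G" "b \<otimes> z = z \<otimes> b"
    unfolding centralizer_def by auto
  have "inv a \<otimes> z = z \<otimes> inv a"
  proof -
    have "inv a \<otimes> z = inv a \<otimes> (z \<otimes> a) \<otimes> inv a" using ag assms
      by (metis inv_closed m_assoc m_closed r_inv r_one)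
    also have "\<dots> = inv a \<otimes> (a \<otimes> z) \<otimes> inv a" using ag by simp
    also have "\<dots> = z \<otimes> inv a" using ag assms by (metis inv_closed l_inv l_one m_assoc m_closed)
    finally show ?thesis .
  qed
  then show "inv a \<in> centralizer G z" using ag unfolding centralizer_def by auto
  have "a \<otimes> b \<otimes> z = z \<otimes> (a \<otimes> b)"
    using ag bg assms by (metis m_assoc)
  then show "a \<otimes> b \<in> centralizer G z" using ag bg unfolding centralizer_def by auto
qed

lemma (in group) canc1: "x \<in> carrier G \<Longrightarrow> w \<in> carrier G \<Longrightarrow> x \<otimes> (inv x \<otimes> w) = w"
  by (simp add: m_assoc[symmetric])

lemma (in group) canc2: "x \<in> carrier G \<Longrightarrow> w \<in> carrier G \<Longrightarrow> inv x \<otimes> (x \<otimes> w) = w"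
  by (simp add: m_assoc[symmetric])

lemma (in group) product_formula:
  assumes H: "subgroup H G" and K: "subgroup K G" and HK: "H <#> K = carrier G"
    and fin: "finite (carrier G)"
  shows "card H * card K = order G * card (H \<inter> K)"
proof -
  have HG: "H \<subseteq> carrier G" and KG: "K \<subseteq> carrier G" using H K subgroup.subset by auto
  have fH: "finite H" and fK: "finite K" using HG KG fin finite_subset by auto
  have "(\<Sum>p\<in>H \<times> K. card {g\<in>carrier G. fst p \<otimes> snd p = g}) = (\<Sum>g\<in>carrier G. card (H \<inter> K))"
  proof (rule sum_multicount_gen)
    show "finite (H \<times> K)" using fH fK by simp
    show "finite (carrier G)" by fact
    show "\<forall>g\<in>carrier G. card {p \<in> H \<times> K. fst p \<otimes> snd p = g} = card (H \<inter> K)"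
    proof
      fix g assume g: "g \<in> carrier G"
      then have "g \<in> H <#> K" using HK by simp
      then obtain h0 c0 where h0: "h0 \<in> H" and c0: "c0 \<in> K" and gd: "g = h0 \<otimes> c0"
        unfolding set_mult_def by auto
      have h0g: "h0 \<in> carrier G" and c0g: "c0 \<in> carrier G" using h0 c0 HG KG by auto
      let ?f = "\<lambda>d. (h0 \<otimes> inv d, d \<otimes> c0)"
      have "{p \<in> H \<times> K. fst p \<otimes> snd p = g} = ?f ` (H \<inter> K)"
      proof (intro equalityI subsetI)
        fix p assume p: "p \<in> {p \<in> H \<times> K. fst p \<otimes> snd p = g}"
        obtain a b where pab: "p = (a, b)" by (cases p)
        with p have a: "a \<in> H" and b: "b \<in> K" and e: "a \<otimes> b = h0 \<otimes> c0" using gd by auto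
        have ag: "a \<in> carrier G" and bg: "b \<in> carrier G" using a b HG KG by auto
        define d where "d = b \<otimes> inv c0"
        have dK: "d \<in> K" unfolding d_def using b c0 K by (simp add: subgroup.m_closed subgroup.m_inv_closed)
        have "d = inv a \<otimes> h0"
        proof -
          have "b = inv a \<otimes> (h0 \<otimes> c0)" using e ag bg h0g c0g
            by (metis inv_solve_left m_closed)
          then show ?thesis unfolding d_def using ag h0g c0g
            by (simp add: m_assoc)
        qed
        then have dH: "d \<in> H" using a h0 H by (simp add: subgroup.m_closed subgroup.m_inv_closed)
        have dg: "d \<in> carrier G" using dK KG by auto
        have "h0 \<otimes> inv d = a" using \<open>d = inv a \<otimes> h0\<close> ag h0g
          by (simp add: inv_mult_group m_assoc[symmetric])
        moreover have "d \<otimes> c0 = b" unfolding d_def using bg c0g by (simp add: m_assoc)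
        ultimately show "p \<in> ?f ` (H \<inter> K)" using pab dH dK by force
      next
        fix p assume "p \<in> ?f ` (H \<inter> K)"
        then obtain d where d: "d \<in> H" "d \<in> K" and pd: "p = ?f d" by auto
        have dg: "d \<in> carrier G" using d HG by auto
        have "h0 \<otimes> inv d \<in> H" using h0 d H by (simp add: subgroup.m_closed subgroup.m_inv_closed)
        moreover have "d \<otimes> c0 \<in> K" using c0 d K by (simp add: subgroup.m_closed)
        moreover have "h0 \<otimes> inv d \<otimes> (d \<otimes> c0) = g" using gd dg h0g c0g
          by (simp add: m_assoc[symmetric]) (simp add: m_assoc)
        ultimately show "p \<in> {p \<in> H \<times> K. fst p \<otimes> snd p = g}" using pd by auto
      qed
      moreover have "inj_on ?f (H \<inter> K)"
      proof (rule inj_onI)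
        fix d e assume "d \<in> H \<inter> K" "e \<in> H \<inter> K" "?f d = ?f e"
        then show "d = e" using HG c0g by (metis IntD1 Pair_inject r_cancel subsetD)
      qed
      ultimately show "card {p \<in> H \<times> K. fst p \<otimes> snd p = g} = card (H \<inter> K)"
        by (simp add: card_image)
    qed
  qed
  moreover have "\<And>p. p \<in> H \<times> K \<Longrightarrow> {g\<in>carrier G. fst p \<otimes> snd p = g} = {fst p \<otimes> snd p}"
    proof -
    fix p assume "p \<in> H \<times> K"
    then have "fst p \<otimes> snd p \<in> carrier G" using HG KG by (auto intro!: m_closed)
    then show "{g\<in>carrier G. fst p \<otimes> snd p = g} = {fst p \<otimes> snd p}" by auto
  qed
  moreover have "(\<Sum>p\<in>H \<times> K. card {g\<in>carrier G. fst p \<otimes> snd p = g}) = (\<Sum>p\<in>H \<times> K. 1)"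
    by (rule sum.cong) (simp_all add: calculation(2))
  ultimately have "(\<Sum>p\<in>H \<times> K. 1) = (\<Sum>g\<in>carrier G. card (H \<inter> K))"
    by simp
  then show ?thesis by (simp add: card_cartesian_product order_def)
qed

lemma (in group) conj_action:
  "group_action G (carrier G) (\<lambda>g. \<lambda>h\<in>carrier G. g \<otimes> h \<otimes> inv g)"
  by (rule action_by_conjugation)

lemma (in group) conj_stab_iff:
  assumes "g \<in> carrier G" "z \<in> carrier G"
  shows "(g \<otimes> z \<otimes> inv g = z) \<longleftrightarrow> (g \<otimes> z = z \<otimes> g)"
  using assms by (metis inv_closed m_assoc m_closed r_inv r_one inv_solve_right)

lemma (in group) orbits_conj:
  "orbits G (carrier G) (\<lambda>g. \<lambda>h\<in>carrier G. g \<otimes> h \<otimes> inv g) = conj_classes G"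
  unfolding orbits_def orbit_def conj_classes_def conj_class_def by auto

lemma (in group) stab_conj:
  assumes "z \<in> carrier G"
  shows "stabilizer G (\<lambda>g. \<lambda>h\<in>carrier G. g \<otimes> h \<otimes> inv g) z = centralizer G z"
  unfolding stabilizer_def centralizer_def using assms conj_stab_iff by auto

lemma (in group) sum_centralizers:
  assumes fin: "finite (carrier G)" and F: "F \<subseteq> conj_classes G"
  shows "(\<Sum>y\<in>\<Union>F. card (centralizer G y)) = order G * card F"
proof -
  interpret A: group_action G "carrier G" "\<lambda>g. \<lambda>h\<in>carrier G. g \<otimes> h \<otimes> inv g"
    by (rule conj_action)
  have sub: "\<And>C. C \<in> conj_classes G \<Longrightarrow> C \<subseteq> carrier G"
    unfolding conj_classes_def conj_class_def by auto
  have finF: "finite F"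
    using F sub fin by (meson finite_Pow_iff finite_subset subsetI PowI)
  have "(\<Sum>y\<in>\<Union>F. card (centralizer G y)) = (\<Sum>C\<in>F. \<Sum>y\<in>C. card (centralizer G y))"
  proof -
    have "\<forall>A\<in>F. finite A" using F sub fin finite_subset by blast
    moreover have "\<forall>A\<in>F. \<forall>B\<in>F. A \<noteq> B \<longrightarrow> A \<inter> B = {}"
      using F A.disjoint_union orbits_conj by blast
    ultimately show ?thesis using sum.Union_disjoint by (simp add: comp_def)
  qed
  also have "\<dots> = (\<Sum>C\<in>F. order G)"
  proof (rule sum.cong)
    fix C assume C: "C \<in> F"
    then have Co: "C \<in> orbits G (carrier G) (\<lambda>g. \<lambda>h\<in>carrier G. g \<otimes> h \<otimes> inv g)"
      using F orbits_conj by auto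
    have "(\<Sum>y\<in>C. card (centralizer G y)) =
       (\<Sum>y\<in>C. card (stabilizer G (\<lambda>g. \<lambda>h\<in>carrier G. g \<otimes> h \<otimes> inv g) y))"
    proof (rule sum.cong)
      fix y assume "y \<in> C"
      then have "y \<in> carrier G" using sub C F by blast
      then show "card (centralizer G y) =
         card (stabilizer G (\<lambda>g. \<lambda>h\<in>carrier G. g \<otimes> h \<otimes> inv g) y)" using stab_conj by simp
    qed simp
    also have "\<dots> = order G" using A.card_stablizer_sum[OF fin Co] .
    finally show "(\<Sum>y\<in>C. card (centralizer G y)) = order G" .
  qed simp
  finally show ?thesis by simp
qed

lemma (in normal) coset_gen_pow:
  assumes x: "x \<in> carrier G" and gen: "carrier (G Mod H) = generate (G Mod H) {H #> x}"
    and g: "g \<in> carrier G"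
  shows "\<exists>k::int. H #> g = H #> (x [^] k)"
proof -
  interpret Q: group "G Mod H" by (rule factorgroup_is_group)
  have hom: "(#>) H \<in> hom G (G Mod H)" by (rule r_coset_hom_Mod)
  have hx: "H #> x \<in> carrier (G Mod H)" using x unfolding FactGroup_def by (simp add: rcosetsI[OF subset])
  have "H #> g \<in> carrier (G Mod H)" using g unfolding FactGroup_def by (simp add: rcosetsI[OF subset])
  then have "H #> g \<in> { (H #> x) [^]\<^bsub>G Mod H\<^esub> (k :: int) | k. k \<in> UNIV }"
    using gen Q.generate_pow[OF hx] by simp
  then obtain k :: int where "H #> g = (H #> x) [^]\<^bsub>G Mod H\<^esub> k"
    by blast
  moreover have "H #> (x [^] k) = (H #> x) [^]\<^bsub>G Mod H\<^esub> k"
    using hom_int_pow[OF hom x is_group Q.is_group] .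
  ultimately show ?thesis by auto
qed

lemma (in normal) good_of:
  assumes x: "x \<in> carrier G" and gen: "carrier (G Mod H) = generate (G Mod H) {H #> x}"
    and c: "c \<in> carrier G" "H #> c = H #> x" and K: "subgroup K G" "c \<in> K"
  shows "H <#> K = carrier G"
proof
  show "H <#> K \<subseteq> carrier G" using K subgroup.subset subset unfolding set_mult_def
    by (auto intro!: m_closed)
  show "carrier G \<subseteq> H <#> K"
  proof
    fix g assume g: "g \<in> carrier G"
    interpret Q: group "G Mod H" by (rule factorgroup_is_group)
    have hom: "(#>) H \<in> hom G (G Mod H)" by (rule r_coset_hom_Mod)
    obtain k :: int where k: "H #> g = H #> (x [^] k)" using coset_gen_pow[OF x gen g] by blast
    have "H #> (c [^] k) = (H #> c) [^]\<^bsub>G Mod H\<^esub> k"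
      using hom_int_pow[OF hom c(1) is_group Q.is_group] .
    also have "\<dots> = H #> (x [^] k)" using hom_int_pow[OF hom x is_group Q.is_group] c(2) by simp
    finally have "H #> g = H #> (c [^] k)" using k by simp
    then have "g \<in> H #> (c [^] k)" using g rcos_self[OF g subgroup_axioms] by simp
    then obtain h where h: "h \<in> H" "g = h \<otimes> c [^] k" unfolding r_coset_def by auto
    have "c [^] k \<in> K" using subgroup_int_pow_closed K by blast
    then show "g \<in> H <#> K" using h unfolding set_mult_def by auto
  qed
qed

theorem lemma2p2:
  fixes G (structure) and H :: "'a set" and x :: 'a
  assumes "group G"
    and "finite (carrier G)"
    and "H \<lhd> G"
    and "x \<in> carrier G"
    and "carrier (G Mod H) = generate (G Mod H) {H #> x}"
  shows "card {C \<in> conj_classes G. C \<subseteq> H #> x}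
       = card {C \<in> conj_classes G. C \<subseteq> H \<and> integral_class G H C}"
proof -
  interpret group G by (rule assms(1))
  interpret N: normal H G by (rule assms(3))
  have fin: "finite (carrier G)" and x: "x \<in> carrier G" and gen: "carrier (G Mod H) = generate (G Mod H) {H #> x}"
    using assms by auto
  define Hx where "Hx = H #> x"
  have Hsub: "subgroup H G" by (rule N.subgroup_axioms)
  have HG: "H \<subseteq> carrier G" by (rule N.subset)
  have HxG: "Hx \<subseteq> carrier G" unfolding Hx_def using r_coset_subset_G[OF HG x] .
  have HxE: "\<And>y. y \<in> Hx \<Longrightarrow> \<exists>a\<in>H. y = a \<otimes> x" unfolding Hx_def r_coset_def by auto
  have HxI: "\<And>a. a \<in> H \<Longrightarrow> a \<otimes> x \<in> Hx" unfolding Hx_def r_coset_def by auto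
  have Zsub: "\<And>z. z \<in> carrier G \<Longrightarrow> subgroup (centralizer G z) G" by (rule centralizer_subgroup)
  have Zmem: "\<And>z g. g \<in> centralizer G z \<longleftrightarrow> g \<in> carrier G \<and> g \<otimes> z = z \<otimes> g"
    unfolding centralizer_def by auto
  have selfZ: "\<And>z. z \<in> carrier G \<Longrightarrow> z \<in> centralizer G z" using Zmem by auto
  have good_if: "\<And>z c. z \<in> carrier G \<Longrightarrow> c \<in> centralizer G z \<Longrightarrow> c \<in> Hx \<Longrightarrow> H <#> centralizer G z = carrier G"
  proof -
    fix z c assume z: "z \<in> carrier G" and cZ: "c \<in> centralizer G z" and cX: "c \<in> Hx"
    have c: "c \<in> carrier G" using cX HxG by auto
    have "H #> c = H #> x" using repr_independence[OF cX[unfolded Hx_def] x Hsub] by simp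
    then show "H <#> centralizer G z = carrier G"
      using N.good_of[OF x gen c _ Zsub[OF z] cZ] by simp
  qed
  have good_only: "\<And>z. z \<in> carrier G \<Longrightarrow> H <#> centralizer G z = carrier G \<Longrightarrow> \<exists>c\<in>centralizer G z. c \<in> Hx"
  proof -
    fix z assume z: "z \<in> carrier G" and gd: "H <#> centralizer G z = carrier G"
    then have "x \<in> H <#> centralizer G z" using x by simp
    then obtain a c where a: "a \<in> H" and cZ: "c \<in> centralizer G z" and e: "x = a \<otimes> c"
      unfolding set_mult_def by auto
    have ag: "a \<in> carrier G" and cg: "c \<in> carrier G" using a HG cZ Zmem by auto
    have "c = inv a \<otimes> x" using e ag cg x by (metis inv_solve_left)
    moreover have "inv a \<in> H" using a Hsub by (simp add: subgroup.m_inv_closed)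
    ultimately have "c \<in> Hx" using HxI by simp
    then show "\<exists>c\<in>centralizer G z. c \<in> Hx" using cZ by blast
  qed
  have goodX: "\<And>y. y \<in> Hx \<Longrightarrow> H <#> centralizer G y = carrier G"
    using good_if selfZ HxG by blast
  have T: "\<And>g y. g \<in> carrier G \<Longrightarrow> y \<in> Hx \<Longrightarrow> g \<otimes> y \<otimes> inv g \<in> Hx"
  proof -
    fix g y assume g: "g \<in> carrier G" and y: "y \<in> Hx"
    have yg: "y \<in> carrier G" using y HxG by auto
    have "g \<in> H <#> centralizer G y" using goodX[OF y] g by simp
    then obtain h c where h: "h \<in> H" and cZ: "c \<in> centralizer G y" and e: "g = h \<otimes> c"
      unfolding set_mult_def by auto
    have hg: "h \<in> carrier G" and cg: "c \<in> carrier G" and cy: "c \<otimes> y = y \<otimes> c" using h HG cZ Zmem by auto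
    obtain a where a: "a \<in> H" and ya: "y = a \<otimes> x" using HxE[OF y] by blast
    have ag: "a \<in> carrier G" using a HG by auto
    have "g \<otimes> y \<otimes> inv g = h \<otimes> (c \<otimes> y) \<otimes> inv c \<otimes> inv h"
      using e hg cg yg by (simp add: m_assoc inv_mult_group)
    also have "\<dots> = h \<otimes> y \<otimes> inv h" using cy hg cg yg by (simp add: m_assoc)
    also have "\<dots> = (h \<otimes> a \<otimes> (x \<otimes> inv h \<otimes> inv x)) \<otimes> x"
      using ya hg ag x by (simp add: m_assoc)
    finally have eq: "g \<otimes> y \<otimes> inv g = (h \<otimes> a \<otimes> (x \<otimes> inv h \<otimes> inv x)) \<otimes> x" .
    have "x \<otimes> inv h \<otimes> inv x \<in> H" using N.inv_op_closed2[OF x] h Hsub by (simp add: subgroup.m_inv_closed)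
    then have "h \<otimes> a \<otimes> (x \<otimes> inv h \<otimes> inv x) \<in> H" using h a Hsub by (simp add: subgroup.m_closed)
    then show "g \<otimes> y \<otimes> inv g \<in> Hx" using eq HxI by simp
  qed

  have ccG: "\<And>z. z \<in> carrier G \<Longrightarrow> conj_class G z \<subseteq> carrier G"
    unfolding conj_class_def by auto
  have cc_self: "\<And>z. z \<in> carrier G \<Longrightarrow> z \<in> conj_class G z"
    unfolding conj_class_def by (force intro!: exI[of _ \<one>])
  have ccH: "\<And>h. h \<in> H \<Longrightarrow> conj_class G h \<subseteq> H"
    unfolding conj_class_def using N.inv_op_closed2 by auto
  have ccHx: "\<And>y. y \<in> Hx \<Longrightarrow> conj_class G y \<subseteq> Hx"
    unfolding conj_class_def using T by auto
  have ccin: "\<And>z. z \<in> carrier G \<Longrightarrow> conj_class G z \<in> conj_classes G"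
    unfolding conj_classes_def by auto
  define F1 where "F1 = {C \<in> conj_classes G. C \<subseteq> H #> x}"
  define F2 where "F2 = {C \<in> conj_classes G. C \<subseteq> H \<and> integral_class G H C}"
  define I where "I = {h \<in> H. H <#> centralizer G h = carrier G}"
  have U1: "\<Union>F1 = Hx"
  proof
    show "\<Union>F1 \<subseteq> Hx" unfolding F1_def Hx_def by auto
    show "Hx \<subseteq> \<Union>F1"
    proof
      fix y assume y: "y \<in> Hx"
      then have "y \<in> carrier G" using HxG by auto
      then show "y \<in> \<Union>F1" using ccHx[OF y] cc_self ccin unfolding F1_def Hx_def by blast
    qed
  qed
  have U2: "\<Union>F2 = I"
  proof
    show "\<Union>F2 \<subseteq> I"
    proof
      fix g assume "g \<in> \<Union>F2"
      then obtain C where C: "C \<in> F2" "g \<in> C" by blast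
      then show "g \<in> I" unfolding F2_def I_def integral_class_def centralizing_subgroup_def by auto
    qed
    show "I \<subseteq> \<Union>F2"
    proof
      fix h assume hI: "h \<in> I"
      then have h: "h \<in> H" and gd: "H <#> centralizer G h = carrier G" unfolding I_def by auto
      have hg: "h \<in> carrier G" using h HG by auto
      obtain c where cZ: "c \<in> centralizer G h" and cX: "c \<in> Hx" using good_only[OF hg gd] by blast
      have cg: "c \<in> carrier G" and ch: "c \<otimes> h = h \<otimes> c" using cZ Zmem by auto
      have "integral_class G H (conj_class G h)"
        unfolding integral_class_def centralizing_subgroup_def
      proof (intro conjI ballI)
        show "conj_class G h \<in> conj_classes G" using ccin hg .
        fix g assume "g \<in> conj_class G h"
        then obtain a where a: "a \<in> carrier G" and ga: "g = a \<otimes> h \<otimes> inv a"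
          unfolding conj_class_def by auto
        have gg: "g \<in> carrier G" using ga a hg by simp
        have "a \<otimes> c \<otimes> inv a \<in> Hx" using T[OF a cX] .
        moreover have "a \<otimes> c \<otimes> inv a \<in> centralizer G g"
        proof -
          have canc: "\<And>w. w \<in> carrier G \<Longrightarrow> inv a \<otimes> (a \<otimes> w) = w"
            using a by (simp add: m_assoc[symmetric])
          have "a \<otimes> c \<otimes> inv a \<otimes> g = a \<otimes> c \<otimes> (inv a \<otimes> a) \<otimes> h \<otimes> inv a"
            using ga a cg hg by (simp add: m_assoc canc)
          also have "\<dots> = a \<otimes> (c \<otimes> h) \<otimes> inv a" using a cg hg by (simp add: m_assoc canc)
          also have "\<dots> = a \<otimes> (h \<otimes> c) \<otimes> inv a" using ch by simp
          also have "\<dots> = a \<otimes> h \<otimes> (inv a \<otimes> a) \<otimes> c \<otimes> inv a"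
            using a cg hg by (simp add: m_assoc canc)
          also have "\<dots> = g \<otimes> (a \<otimes> c \<otimes> inv a)"
            using ga a cg hg by (simp add: m_assoc canc)
          finally show ?thesis using Zmem a cg by auto
        qed
        ultimately show "H <#> centralizer G g = carrier G" using good_if[OF gg] by blast
      qed
      then have "conj_class G h \<in> F2" unfolding F2_def using ccin[OF hg] ccH[OF h] by auto
      then show "h \<in> \<Union>F2" using cc_self[OF hg] by blast
    qed
  qed
  have S1: "(\<Sum>y\<in>Hx. card (centralizer G y)) = order G * card F1"
    using sum_centralizers[OF fin, of F1] U1 unfolding F1_def by auto
  have S2: "(\<Sum>h\<in>I. card (centralizer G h)) = order G * card F2"
    using sum_centralizers[OF fin, of F2] U2 unfolding F2_def by auto
  have finHx: "finite Hx" using HxG fin finite_subset by auto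
  have finH: "finite H" using HG fin finite_subset by auto
  have IH: "I \<subseteq> H" unfolding I_def by auto
  have E1: "card H * (\<Sum>y\<in>Hx. card (centralizer G y)) = order G * (\<Sum>y\<in>Hx. card (H \<inter> centralizer G y))"
    unfolding sum_distrib_left
  proof (rule sum.cong)
    fix y assume y: "y \<in> Hx"
    then have yg: "y \<in> carrier G" using HxG by auto
    show "card H * card (centralizer G y) = order G * card (H \<inter> centralizer G y)"
      using product_formula[OF Hsub Zsub[OF yg] goodX[OF y] fin] .
  qed simp
  have E2: "card H * (\<Sum>h\<in>I. card (centralizer G h)) = order G * (\<Sum>h\<in>I. card (H \<inter> centralizer G h))"
    unfolding sum_distrib_left
  proof (rule sum.cong)
    fix h assume h: "h \<in> I"
    then have hg: "h \<in> carrier G" using IH HG by auto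
    show "card H * card (centralizer G h) = order G * card (H \<inter> centralizer G h)"
      using product_formula[OF Hsub Zsub[OF hg] _ fin] h unfolding I_def by auto
  qed simp
  have E3: "(\<Sum>h\<in>I. card (H \<inter> centralizer G h)) = (\<Sum>h\<in>H. card {y\<in>Hx. h \<otimes> y = y \<otimes> h})"
  proof -
    have "(\<Sum>h\<in>I. card (H \<inter> centralizer G h)) = (\<Sum>h\<in>I. card {y\<in>Hx. h \<otimes> y = y \<otimes> h})"
    proof (rule sum.cong)
      fix h assume hI: "h \<in> I"
      then have h: "h \<in> H" and gd: "H <#> centralizer G h = carrier G" unfolding I_def by auto
      have hg: "h \<in> carrier G" using h HG by auto
      obtain c0 where cZ: "c0 \<in> centralizer G h" and cX: "c0 \<in> Hx" using good_only[OF hg gd] by blast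
      have c0g: "c0 \<in> carrier G" using cZ Zmem by auto
      have seteq: "{y\<in>Hx. h \<otimes> y = y \<otimes> h} = (\<lambda>d. d \<otimes> c0) ` (H \<inter> centralizer G h)"
      proof (intro equalityI subsetI)
        fix y assume "y \<in> {y\<in>Hx. h \<otimes> y = y \<otimes> h}"
        then have yX: "y \<in> Hx" and yh: "h \<otimes> y = y \<otimes> h" by auto
        have yg: "y \<in> carrier G" using yX HxG by auto
        have yZ: "y \<in> centralizer G h" using Zmem yg yh by auto
        have dZ: "y \<otimes> inv c0 \<in> centralizer G h"
          using Zsub[OF hg] yZ cZ by (simp add: subgroup.m_closed subgroup.m_inv_closed)
        obtain b where b: "b \<in> H" "y = b \<otimes> x" using HxE[OF yX] by blast
        obtain a where a: "a \<in> H" "c0 = a \<otimes> x" using HxE[OF cX] by blast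
        have ag: "a \<in> carrier G" and bg: "b \<in> carrier G" using a b HG by auto
        have "y \<otimes> inv c0 = b \<otimes> inv a" using a b ag bg x
          by (simp add: m_assoc inv_mult_group canc1)
        then have dH: "y \<otimes> inv c0 \<in> H" using a b Hsub by (simp add: subgroup.m_closed subgroup.m_inv_closed)
        have "y = (y \<otimes> inv c0) \<otimes> c0" using yg c0g by (simp add: m_assoc)
        then show "y \<in> (\<lambda>d. d \<otimes> c0) ` (H \<inter> centralizer G h)" using dH dZ by blast
      next
        fix y assume "y \<in> (\<lambda>d. d \<otimes> c0) ` (H \<inter> centralizer G h)"
        then obtain d where dH: "d \<in> H" and dZ: "d \<in> centralizer G h" and yd: "y = d \<otimes> c0" by auto
        obtain a where a: "a \<in> H" "c0 = a \<otimes> x" using HxE[OF cX] by blast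
        have ag: "a \<in> carrier G" and dg: "d \<in> carrier G" using a dH HG by auto
        have "y = (d \<otimes> a) \<otimes> x" using yd a ag dg x by (simp add: m_assoc)
        moreover have "d \<otimes> a \<in> H" using dH a Hsub by (simp add: subgroup.m_closed)
        ultimately have "y \<in> Hx" using HxI by simp
        moreover have "y \<in> centralizer G h" using yd Zsub[OF hg] dZ cZ by (simp add: subgroup.m_closed)
        ultimately show "y \<in> {y\<in>Hx. h \<otimes> y = y \<otimes> h}" using Zmem by auto
      qed
      have "inj_on (\<lambda>d. d \<otimes> c0) (H \<inter> centralizer G h)"
        by (rule inj_onI) (use HG c0g in \<open>metis IntD1 r_cancel subsetD\<close>)
      then show "card (H \<inter> centralizer G h) = card {y\<in>Hx. h \<otimes> y = y \<otimes> h}"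
        using seteq by (simp add: card_image)
    qed simp
    also have "\<dots> = (\<Sum>h\<in>H. card {y\<in>Hx. h \<otimes> y = y \<otimes> h})"
    proof (rule sum.mono_neutral_left[OF finH IH])
      show "\<forall>h\<in>H - I. card {y\<in>Hx. h \<otimes> y = y \<otimes> h} = 0"
      proof
        fix h assume h: "h \<in> H - I"
        then have hg: "h \<in> carrier G" using HG by auto
        have "{y\<in>Hx. h \<otimes> y = y \<otimes> h} = {}"
        proof (rule ccontr)
          assume "{y\<in>Hx. h \<otimes> y = y \<otimes> h} \<noteq> {}"
          then obtain y where y: "y \<in> Hx" "h \<otimes> y = y \<otimes> h" by auto
          then have "y \<in> centralizer G h" using Zmem HxG by auto
          then have "H <#> centralizer G h = carrier G" using good_if[OF hg] y by blast
          then show False using h unfolding I_def by auto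
        qed
        then show "card {y\<in>Hx. h \<otimes> y = y \<otimes> h} = 0" by (metis card.empty)
      qed
    qed
    finally show ?thesis .
  qed
  have E4: "(\<Sum>y\<in>Hx. card (H \<inter> centralizer G y)) = (\<Sum>h\<in>H. card {y\<in>Hx. h \<otimes> y = y \<otimes> h})"
  proof -
    have "(\<Sum>h\<in>H. card {y\<in>Hx. h \<otimes> y = y \<otimes> h}) = (\<Sum>y\<in>Hx. card {h\<in>H. h \<otimes> y = y \<otimes> h})"
      by (rule sum_multicount_gen[OF finH finHx]) simp
    moreover have "\<And>y. y \<in> Hx \<Longrightarrow> H \<inter> centralizer G y = {h\<in>H. h \<otimes> y = y \<otimes> h}"
      using Zmem HG by auto
    ultimately show ?thesis by simp
  qed
  have "card H * (order G * card F1) = card H * (\<Sum>y\<in>Hx. card (centralizer G y))"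
    using S1 by simp
  also have "\<dots> = order G * (\<Sum>h\<in>H. card {y\<in>Hx. h \<otimes> y = y \<otimes> h})"
    using E1 E4 by simp
  also have "\<dots> = card H * (\<Sum>h\<in>I. card (centralizer G h))"
    using E2 E3 by simp
  also have "\<dots> = card H * (order G * card F2)"
    using S2 by simp
  finally have "card H * (order G * card F1) = card H * (order G * card F2)" .
  moreover have "card H > 0" using finH Hsub subgroup.one_closed card_gt_0_iff by blast
  moreover have "order G > 0" using fin order_gt_0_iff_finite by blast
  ultimately have "card F1 = card F2" by simp
  then show ?thesis unfolding F1_def F2_def .
qed

end
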